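(* In the Banach space $C^0([0,1])$ of continuous real functions on $[0,1]$ with the supremum norm, the set of functions which are not completely non-Hölder is meagre (i.e. of first Baire category).
   Context: For $\alpha>0$, a function $g:[0,1]\to\mathbb{R}$ is called $\alpha$-Hölder at $x_0$ from the right if $\limsup_{y\searrow x_0}\frac{|g(y)-g(x_0)|}{|y-x_0|^\alpha}<\infty$, and $\alpha$-Hölder at $x_0$ from the left if $\limsup_{y\nearrow x_0}\frac{|g(y)-g(x_0)|}{|y-x_0|^\alpha}<\infty$. The function $g$ is called completely non-Hölder if there is no $x_0\in[0,1]$ and no $\alpha>0$ such that $g$ is $\alpha$-Hölder at $x_0$ from the left or from the right. *)

theory Defs
  imports "HOL-Analysis.Analysis"
begin

definition nowhere_dense_in :: "'a topology \<Rightarrow> 'a set \<Rightarrow> bool" where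
  "nowhere_dense_in X S \<longleftrightarrow> S \<subseteq> topspace X \<and> X interior_of (X closure_of S) = {}"

definition meagre_in :: "'a topology \<Rightarrow> 'a set \<Rightarrow> bool" where
  "meagre_in X S \<longleftrightarrow> S \<subseteq> topspace X \<and>
     (\<exists>\<F>. countable \<F> \<and> (\<forall>T\<in>\<F>. nowhere_dense_in X T) \<and> S \<subseteq> \<Union>\<F>)"

text \<open>The Banach space C^0([0,1]) with the supremum metric: continuous real
  functions on [0,1] (extensional, i.e. undefined outside [0,1]).\<close>
definition C01 :: "(real \<Rightarrow> real) metric" where
  "C01 = cfunspace (top_of_set {0..1}) euclidean_metric"

text \<open>Hoelder continuity from the right / left at a point (the one-sided
  condition only makes sense when points on that side exist in [0,1]).\<close>
definition holder_right :: "(real \<Rightarrow> real) \<Rightarrow> real \<Rightarrow> real \<Rightarrow> bool" where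
  "holder_right g x0 \<alpha> \<longleftrightarrow> x0 < 1 \<and>
     Limsup (at x0 within {x0<..1}) (\<lambda>y. ereal (\<bar>g y - g x0\<bar> / \<bar>y - x0\<bar> powr \<alpha>)) < \<infinity>"

definition holder_left :: "(real \<Rightarrow> real) \<Rightarrow> real \<Rightarrow> real \<Rightarrow> bool" where
  "holder_left g x0 \<alpha> \<longleftrightarrow> 0 < x0 \<and>
     Limsup (at x0 within {0..<x0}) (\<lambda>y. ereal (\<bar>g y - g x0\<bar> / \<bar>y - x0\<bar> powr \<alpha>)) < \<infinity>"

definition completely_non_holder :: "(real \<Rightarrow> real) \<Rightarrow> bool" where
  "completely_non_holder g \<longleftrightarrow>
     \<not> (\<exists>x0\<in>{0..1}. \<exists>\<alpha>>0. holder_left g x0 \<alpha> \<or> holder_right g x0 \<alpha>)"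

end

theory Submission
  imports Defs
begin

lemma sin_shift_int: "sin ((c::real) + 2*pi * of_int k) = sin c"
  by (simp add: sin_add)

lemma sin_far_right: "\<exists>u\<in>{t..t+2*pi::real}. 1 \<le> \<bar>sin u - sin t\<bar>"
proof (cases "sin t \<ge> 0")
  case True
  define k where "k = \<lceil>(t + pi/2) / (2*pi)\<rceil>"
  define u where "u = -pi/2 + 2*pi * of_int k"
  have "(t + pi/2) / (2*pi) \<le> of_int k" "of_int k < (t + pi/2) / (2*pi) + 1"
    unfolding k_def by linarith+
  hence "t \<le> u" "u \<le> t + 2*pi" unfolding u_def using pi_gt_zero
    by (simp_all add: field_simps)
  moreover have "sin u = sin (-pi/2)" unfolding u_def by (rule sin_shift_int)
  hence "sin u = -1" by simp
  ultimately show ?thesis using True by (intro bexI[of _ u]) auto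
next
  case False
  define k where "k = \<lceil>(t - pi/2) / (2*pi)\<rceil>"
  define u where "u = pi/2 + 2*pi * of_int k"
  have "(t - pi/2) / (2*pi) \<le> of_int k" "of_int k < (t - pi/2) / (2*pi) + 1"
    unfolding k_def by linarith+
  hence "t \<le> u" "u \<le> t + 2*pi" unfolding u_def using pi_gt_zero
    by (simp_all add: field_simps)
  moreover have "sin u = sin (pi/2)" unfolding u_def by (rule sin_shift_int)
  hence "sin u = 1" by simp
  ultimately show ?thesis using False by (intro bexI[of _ u]) auto
qed

lemma sin_far_left: "\<exists>u\<in>{t-2*pi..t::real}. 1 \<le> \<bar>sin u - sin t\<bar>"
proof -
  obtain u where "u\<in>{-t..-t+2*pi}" "1 \<le> \<bar>sin u - sin (-t)\<bar>" using sin_far_right[of "-t"] by blast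
  then show ?thesis by (intro bexI[of _ "-u"]) auto
qed

lemma mspace_C01: "mspace C01 = {f. f \<in> extensional {0..1} \<and> continuous_on {0..1} f}"
  unfolding C01_def
  apply (subst compactin_mspace_cfunspace)
  apply (simp add: compactin_subtopology)
  apply (auto simp: continuous_map_iff_continuous)
  done

lemma C01_le: "f \<in> mspace C01 \<Longrightarrow> g \<in> mspace C01 \<Longrightarrow> x \<in> {0..1} \<Longrightarrow> \<bar>f x - g x\<bar> \<le> mdist C01 f g"
  unfolding C01_def using mdist_cfunspace_imp_mdist_le[of f "top_of_set {0..1}" euclidean_metric g "mdist (cfunspace (top_of_set {0..1}) euclidean_metric) f g" x]
  by (simp add: dist_real_def)

lemma C01_ge: "0 \<le> B \<Longrightarrow> (\<And>x. x \<in> {0..1} \<Longrightarrow> \<bar>f x - g x\<bar> \<le> B) \<Longrightarrow> mdist C01 f g \<le> B"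
  unfolding C01_def by (rule mdist_cfunspace_le) (auto simp: dist_real_def)

definition EE :: "nat \<Rightarrow> real \<Rightarrow> (real \<Rightarrow> real) set" where
  "EE n s = {g \<in> mspace C01. \<exists>x0\<in>{0..1}. x0 + s / real n \<in> {0..1} \<and>
      (\<forall>y\<in>{0..1}. 0 \<le> s * (y - x0) \<longrightarrow> \<bar>g y - g x0\<bar> \<le> real n * \<bar>y - x0\<bar> powr (1 / real n))}"

lemma holder_to_EE:
  assumes g: "g \<in> mspace C01" and x0: "x0 \<in> {0..1}" and a: "\<alpha> > 0" and s: "s = 1 \<or> s = -1"
    and c: "c > 0" "x0 + s*c \<in> {0..1}"
    and L: "Limsup (at x0 within {y\<in>{0..1}. 0 < s*(y-x0)}) (\<lambda>y. ereal (\<bar>g y - g x0\<bar> / \<bar>y - x0\<bar> powr \<alpha>)) < \<infinity>"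
  shows "\<exists>n\<ge>1. g \<in> EE n s"
proof -
  obtain m :: nat where m: "Limsup (at x0 within {y\<in>{0..1}. 0 < s*(y-x0)}) (\<lambda>y. ereal (\<bar>g y - g x0\<bar> / \<bar>y - x0\<bar> powr \<alpha>)) < ereal (real m)"
    using L less_PInf_Ex_of_nat by auto
  define M where "M = real m"
  have "eventually (\<lambda>y. ereal (\<bar>g y - g x0\<bar> / \<bar>y - x0\<bar> powr \<alpha>) < ereal M) (at x0 within {y\<in>{0..1}. 0 < s*(y-x0)})"
    using Limsup_lessD[OF m] unfolding M_def .
  then obtain d where d: "d > 0" and dP: "\<And>y. y \<in> {y\<in>{0..1}. 0 < s*(y-x0)} \<Longrightarrow> y \<noteq> x0 \<Longrightarrow> dist y x0 < d \<Longrightarrow>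
      \<bar>g y - g x0\<bar> / \<bar>y - x0\<bar> powr \<alpha> < M"
    unfolding eventually_at by auto
  have gc: "continuous_on {0..1} g" using g by (simp add: mspace_C01)
  obtain B where B: "\<And>x. x \<in> {0..1} \<Longrightarrow> \<bar>g x\<bar> \<le> B"
    using compact_imp_bounded[OF compact_continuous_image[OF gc compact_Icc]] unfolding bounded_real by fastforce
  define d' where "d' = min d 1"
  have d': "0 < d'" "d' \<le> 1" "d' \<le> d" using d by (auto simp: d'_def)
  obtain n :: nat where n: "max (max 1 (1/\<alpha>)) (max (1/c) (max M (2*B/d'))) \<le> real n"
    using real_arch_simple by blast
  have n1: "1 \<le> real n" and na: "1/\<alpha> \<le> real n" and nc: "1/c \<le> real n" and nM: "M \<le> real n"
    and nB: "2*B/d' \<le> real n" using n by auto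
  have npos: "0 < real n" using n1 by simp
  have ia: "1 / real n \<le> \<alpha>" using na a npos by (simp add: field_simps)
  have ic: "1 / real n \<le> c" using nc c npos by (simp add: field_simps)
  have i1: "1 / real n \<le> 1" using n1 by simp
  have ip: "0 < 1 / real n" using npos by simp
  have nB': "2*B \<le> real n * d'" using nB d' by (simp add: field_simps)
  have Mnn: "0 \<le> M" unfolding M_def by simp
  have "g \<in> EE n s"
    unfolding EE_def
  proof (intro CollectI conjI bexI[of _ x0] ballI impI g x0)
    have h1: "0 \<le> x0 + s*c" "x0 + s*c \<le> 1" "0 \<le> x0" "x0 \<le> 1" using c x0 by auto
    have "s / real n = s * (1 / real n)" by simp
    moreover have "0 \<le> x0 + s * (1 / real n) \<and> x0 + s * (1 / real n) \<le> 1"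
      using s
    proof
      assume "s = 1" hence "s*(1/real n) = 1/real n" "s*c = c" by simp_all
      thus ?thesis using h1 ic ip by linarith
    next
      assume "s = -1" hence "s*(1/real n) = -(1/real n)" "s*c = -c" by simp_all
      thus ?thesis using h1 ic ip by linarith
    qed
    ultimately show "x0 + s / real n \<in> {0..1}" by simp
    fix y assume y: "y \<in> {0..1}" and sy: "0 \<le> s * (y - x0)"
    define t where "t = \<bar>y - x0\<bar>"
    have t01: "0 \<le> t" "t \<le> 1" using x0 y by (auto simp: t_def)
    have "\<bar>g y - g x0\<bar> \<le> real n * t powr (1 / real n)"
    proof (cases "y = x0")
      case True then show ?thesis by (simp add: t_def)
    next
      case ne: False
      have tpos: "0 < t" using ne by (simp add: t_def)
      have tle: "t \<le> t powr (1 / real n)"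
        using powr_mono'[of "1/real n" 1 t] t01 i1 by simp
      have tpa: "t powr \<alpha> \<le> t powr (1 / real n)"
        using powr_mono'[of "1/real n" \<alpha> t] t01 ia by simp
      show ?thesis
      proof (cases "t < d'")
        case True
        have "y \<in> {y\<in>{0..1}. 0 < s*(y-x0)}" using y sy ne s by auto
        moreover have "dist y x0 < d" using True d' by (simp add: dist_real_def t_def)
        ultimately have "\<bar>g y - g x0\<bar> / t powr \<alpha> < M" using dP ne by (simp add: t_def)
        hence "\<bar>g y - g x0\<bar> < M * t powr \<alpha>" using tpos by (simp add: field_simps)
        also have "\<dots> \<le> real n * t powr (1 / real n)"
          using mult_mono[OF nM tpa] Mnn by simp
        finally show ?thesis by simp
      next
        case False
        have "\<bar>g y - g x0\<bar> \<le> 2*B" using B[OF y] B[OF x0] by linarith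
        also have "\<dots> \<le> real n * d'" by (rule nB')
        also have "\<dots> \<le> real n * t" using False npos by simp
        also have "\<dots> \<le> real n * t powr (1 / real n)" using tle npos by simp
        finally show ?thesis .
      qed
    qed
    thus "\<bar>g y - g x0\<bar> \<le> real n * \<bar>y - x0\<bar> powr (1 / real n)" by (simp add: t_def)
  qed
  then show ?thesis using n1 by (intro exI[of _ n]) auto
qed

lemma root_bound:
  assumes "0 < r" "0 \<le> D" "D \<le> r ^ n" "n \<ge> 1"
  shows "D powr (1 / real n) \<le> r"
proof -
  have "D powr (1 / real n) \<le> (r ^ n) powr (1 / real n)"
    using assms by (intro powr_mono2) auto
  also have "r ^ n = r powr real n" using assms by (simp add: powr_realpow)
  also have "(r powr real n) powr (1 / real n) = r"
    using assms by (simp add: powr_powr)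
  finally show ?thesis .
qed

lemma EE_escape:
  assumes n: "n \<ge> 1" and s: "s = 1 \<or> s = -1" and g: "g \<in> mspace C01" and e: "\<epsilon> > 0"
  shows "\<exists>h\<in>mspace C01. mdist C01 g h < \<epsilon> \<and> h \<notin> EE n s"
proof -
  define a where "a = \<epsilon> / 2"
  have a: "0 < a" "a < \<epsilon>" using e by (auto simp: a_def)
  have gc: "continuous_on {0..1} g" and gext: "g \<in> extensional {0..1}" using g by (auto simp: mspace_C01)
  have "uniformly_continuous_on {0..1} g" using gc by (intro compact_uniformly_continuous) auto
  then obtain \<delta> where \<delta>: "\<delta> > 0" and uc: "\<And>x x'. x \<in> {0..1} \<Longrightarrow> x' \<in> {0..1} \<Longrightarrow> dist x' x < \<delta> \<Longrightarrow> dist (g x') (g x) < a/4"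
    unfolding uniformly_continuous_on_def using a by (metis divide_pos_pos zero_less_numeral)
  have npos: "0 < real n" using n by simp
  define r where "r = a / (8 * real n)"
  have r: "0 < r" using a npos by (simp add: r_def)
  define D where "D = min (1 / real n) (min (\<delta>/2) (r ^ n))"
  have D: "0 < D" "D \<le> 1 / real n" "D < \<delta>" "D \<le> r ^ n" using npos \<delta> r by (auto simp: D_def)
  have Dr: "real n * D powr (1 / real n) \<le> a / 8"
  proof -
    have "D powr (1 / real n) \<le> r" using root_bound[OF r _ D(4) n] D by simp
    hence "real n * D powr (1 / real n) \<le> real n * r" using npos by simp
    also have "\<dots> = a / 8" using npos by (simp add: r_def)
    finally show ?thesis .
  qed
  define N where "N = 2 * pi / D"
  have N: "0 < N" using D by (simp add: N_def)
  have ND: "2 * pi / N = D" using D by (simp add: N_def)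
  define h where "h = (\<lambda>x. if x \<in> {0..1} then g x + a * sin (N * x) else undefined)"
  have hC: "h \<in> mspace C01"
    unfolding mspace_C01
  proof (intro CollectI conjI)
    show "h \<in> extensional {0..1}" unfolding h_def extensional_def by auto
    have "continuous_on {0..1} (\<lambda>x. g x + a * sin (N * x))"
      by (intro continuous_intros gc)
    then show "continuous_on {0..1} h"
      by (rule continuous_on_eq) (simp add: h_def)
  qed
  have "mdist C01 g h \<le> a"
    using a by (intro C01_ge) (auto simp: h_def abs_mult intro!: mult_left_le_one_le)
  hence dist: "mdist C01 g h < \<epsilon>" using a by simp
  have key: False if x0: "x0 \<in> {0..1}" and y: "y \<in> {0..1}" and yx: "\<bar>y - x0\<bar> \<le> D"
     and sn: "1 \<le> \<bar>sin (N*y) - sin (N*x0)\<bar>"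
     and hb: "\<bar>h y - h x0\<bar> \<le> real n * \<bar>y - x0\<bar> powr (1 / real n)" for x0 y
  proof -
    have "\<bar>g y - g x0\<bar> < a/4" using uc[OF x0 y] yx D by (simp add: dist_real_def)
    moreover have "a \<le> \<bar>a * (sin (N*y) - sin (N*x0))\<bar>" using sn a by (simp add: abs_mult)
    moreover have "h y - h x0 = (g y - g x0) + a * (sin (N*y) - sin (N*x0))"
      using x0 y by (simp add: h_def algebra_simps)
    ultimately have "3*a/4 < \<bar>h y - h x0\<bar>" by arith
    moreover have "\<bar>y - x0\<bar> powr (1 / real n) \<le> D powr (1 / real n)"
      using yx by (intro powr_mono2) auto
    hence "real n * \<bar>y - x0\<bar> powr (1 / real n) \<le> a / 8" using Dr npos
      by (meson mult_left_mono of_nat_0_le_iff order_trans)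
    ultimately show False using hb a by linarith
  qed
  have "h \<notin> EE n s"
  proof
    assume "h \<in> EE n s"
    then obtain x0 where x0: "x0 \<in> {0..1}" and xs: "x0 + s / real n \<in> {0..1}"
      and H: "\<And>y. y \<in> {0..1} \<Longrightarrow> 0 \<le> s * (y - x0) \<Longrightarrow> \<bar>h y - h x0\<bar> \<le> real n * \<bar>y - x0\<bar> powr (1 / real n)"
      unfolding EE_def by blast
    from s show False
    proof
      assume s1: "s = 1"
      obtain u where u: "u \<in> {N*x0..N*x0 + 2*pi}" "1 \<le> \<bar>sin u - sin (N*x0)\<bar>"
        using sin_far_right by blast
      define y where "y = u / N"
      have uy: "u = N * y" using N by (simp add: y_def)
      have "x0 \<le> y" "y \<le> x0 + D" using u N ND
        by (auto simp: y_def field_simps)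
      moreover have "x0 + 1 / real n \<le> 1" using xs s1 by simp
      ultimately have "y \<in> {0..1}" "\<bar>y - x0\<bar> \<le> D" "0 \<le> s * (y - x0)" using x0 D s1 by auto
      then show False using key[OF x0 _ _ _ H] u uy by auto
    next
      assume s1: "s = -1"
      obtain u where u: "u \<in> {N*x0 - 2*pi..N*x0}" "1 \<le> \<bar>sin u - sin (N*x0)\<bar>"
        using sin_far_left by blast
      define y where "y = u / N"
      have uy: "u = N * y" using N by (simp add: y_def)
      have "y \<le> x0" "x0 - D \<le> y" using u N ND
        by (auto simp: y_def field_simps)
      moreover have "0 \<le> x0 - 1 / real n" using xs s1 by simp
      ultimately have "y \<in> {0..1}" "\<bar>y - x0\<bar> \<le> D" "0 \<le> s * (y - x0)" using x0 D s1 by auto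
      then show False using key[OF x0 _ _ _ H] u uy by auto
    qed
  qed
  then show ?thesis using hC dist by blast
qed

lemma EE_closed:
  assumes n: "n \<ge> 1" and s: "s = 1 \<or> s = -1"
  shows "closedin (mtopology_of C01) (EE n s)"
proof -
  interpret Metric_space "mspace C01" "mdist C01" by (rule Metric_space_mspace_mdist)
  have npos: "0 < real n" using n by simp
  define K where "K = {x\<in>{0..1}. x + s / real n \<in> {0..1}}"
  have "K = {max 0 (- (s / real n)) .. min 1 (1 - s / real n)}" unfolding K_def by auto
  hence Kc: "compact K" by simp
  show ?thesis
    unfolding mtopology_of_def metric_closedin_iff_sequentially_closed
  proof (intro conjI allI impI)
    show "EE n s \<subseteq> mspace C01" unfolding EE_def by auto
    fix \<sigma> l assume A: "range \<sigma> \<subseteq> EE n s \<and> limitin mtopology \<sigma> l sequentially"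
    hence sE: "\<And>k. \<sigma> k \<in> EE n s" by auto
    hence sM: "\<And>k. \<sigma> k \<in> mspace C01" unfolding EE_def by auto
    have lM: "l \<in> mspace C01" and lim: "\<And>\<epsilon>. \<epsilon> > 0 \<Longrightarrow> eventually (\<lambda>k. \<sigma> k \<in> mspace C01 \<and> mdist C01 (\<sigma> k) l < \<epsilon>) sequentially"
      using A limitin_metric by auto
    have lc: "continuous_on {0..1} l" using lM by (simp add: mspace_C01)
    have d0: "(\<lambda>k. mdist C01 (\<sigma> k) l) \<longlonglongrightarrow> 0"
      unfolding tendsto_iff
    proof (intro allI impI)
      fix e :: real assume "e > 0"
      from lim[OF this] show "eventually (\<lambda>k. dist (mdist C01 (\<sigma> k) l) 0 < e) sequentially"
        by eventually_elim (simp add: dist_real_def)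
    qed
    have "\<forall>k. \<exists>x. x \<in> K \<and> (\<forall>y\<in>{0..1}. 0 \<le> s * (y - x) \<longrightarrow> \<bar>\<sigma> k y - \<sigma> k x\<bar> \<le> real n * \<bar>y - x\<bar> powr (1 / real n))"
      using sE unfolding EE_def K_def by blast
    then obtain xk where xk: "\<And>k. xk k \<in> K"
      and xkH: "\<And>k y. y \<in> {0..1} \<Longrightarrow> 0 \<le> s * (y - xk k) \<Longrightarrow> \<bar>\<sigma> k y - \<sigma> k (xk k)\<bar> \<le> real n * \<bar>y - xk k\<bar> powr (1 / real n)"
      by metis
    obtain x r where xK: "x \<in> K" and r: "strict_mono (r :: nat \<Rightarrow> nat)" and xr: "(xk \<circ> r) \<longlonglongrightarrow> x"
      using seq_compactE[OF compact_imp_seq_compact[OF Kc]] xk by metis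
    have xr': "(\<lambda>k. xk (r k)) \<longlonglongrightarrow> x" using xr by (simp add: comp_def)
    have xk01: "\<And>k. xk k \<in> {0..1}" using xk by (simp add: K_def)
    have x01: "x \<in> {0..1}" using xK by (simp add: K_def)
    have dr: "(\<lambda>k. mdist C01 (\<sigma> (r k)) l) \<longlonglongrightarrow> 0"
      using LIMSEQ_subseq_LIMSEQ[OF d0 r] by (simp add: comp_def)
    have pw: "(\<lambda>k. \<sigma> (r k) z) \<longlonglongrightarrow> l z" if z: "z \<in> {0..1}" for z
    proof -
      have "(\<lambda>k. \<sigma> (r k) z - l z) \<longlonglongrightarrow> 0"
        by (rule Lim_null_comparison[OF _ dr]) (use C01_le[OF sM lM z] in auto)
      thus ?thesis by (simp add: LIM_zero_iff)
    qed
    have mv: "(\<lambda>k. \<sigma> (r k) (xk (r k))) \<longlonglongrightarrow> l x"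
    proof -
      have 1: "(\<lambda>k. \<sigma> (r k) (xk (r k)) - l (xk (r k))) \<longlonglongrightarrow> 0"
        by (rule Lim_null_comparison[OF _ dr]) (use C01_le[OF sM lM xk01] in auto)
      have 2: "(\<lambda>k. l (xk (r k))) \<longlonglongrightarrow> l x"
        by (rule continuous_on_tendsto_compose[OF lc xr' x01]) (use xk01 in auto)
      have "(\<lambda>k. (\<sigma> (r k) (xk (r k)) - l (xk (r k))) + l (xk (r k))) \<longlonglongrightarrow> 0 + l x"
        by (rule tendsto_add[OF 1 2])
      thus ?thesis by simp
    qed
    show "l \<in> EE n s"
      unfolding EE_def
    proof (intro CollectI conjI lM bexI[of _ x] ballI impI x01)
      show "x + s / real n \<in> {0..1}" using xK by (simp add: K_def)
      fix y assume y: "y \<in> {0..1}" and sy: "0 \<le> s * (y - x)"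
      show "\<bar>l y - l x\<bar> \<le> real n * \<bar>y - x\<bar> powr (1 / real n)"
      proof (cases "y = x")
        case True then show ?thesis by simp
      next
        case False
        have pos: "0 < s * (y - x)" using sy False s by auto
        have "(\<lambda>k. s * (y - xk (r k))) \<longlonglongrightarrow> s * (y - x)"
          by (intro tendsto_intros xr')
        hence ev: "eventually (\<lambda>k. 0 < s * (y - xk (r k))) sequentially"
          using order_tendstoD(1)[OF _ pos] by blast
        have evb: "eventually (\<lambda>k. \<bar>\<sigma> (r k) y - \<sigma> (r k) (xk (r k))\<bar> \<le> real n * \<bar>y - xk (r k)\<bar> powr (1 / real n)) sequentially"
          using ev by eventually_elim (intro xkH y, simp)
        have L1: "(\<lambda>k. \<bar>\<sigma> (r k) y - \<sigma> (r k) (xk (r k))\<bar>) \<longlonglongrightarrow> \<bar>l y - l x\<bar>"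
          by (intro tendsto_intros pw y mv)
        have L2: "(\<lambda>k. real n * \<bar>y - xk (r k)\<bar> powr (1 / real n)) \<longlonglongrightarrow> real n * \<bar>y - x\<bar> powr (1 / real n)"
          by (intro tendsto_mult tendsto_const tendsto_powr tendsto_intros xr') (use False in auto)
        show ?thesis by (rule tendsto_le[OF _ L2 L1 evb]) simp
      qed
    qed
  qed
qed

lemma EE_nowhere_dense:
  assumes n: "n \<ge> 1" and s: "s = 1 \<or> s = -1"
  shows "nowhere_dense_in (mtopology_of C01) (EE n s)"
  unfolding nowhere_dense_in_def
proof (intro conjI)
  show "EE n s \<subseteq> topspace (mtopology_of C01)" unfolding EE_def by auto
  have cl: "mtopology_of C01 closure_of EE n s = EE n s"
    using EE_closed[OF n s] by (simp add: closure_of_eq)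
  have "g \<notin> mtopology_of C01 interior_of EE n s" for g
  proof
    assume "g \<in> mtopology_of C01 interior_of EE n s"
    then obtain T where T: "openin (mtopology_of C01) T" "g \<in> T" "T \<subseteq> EE n s"
      unfolding interior_of_def by blast
    interpret Metric_space "mspace C01" "mdist C01" by (rule Metric_space_mspace_mdist)
    obtain e where e: "e > 0" "mball g e \<subseteq> T"
      using T unfolding mtopology_of_def openin_mtopology by blast
    have gM: "g \<in> mspace C01" using T unfolding EE_def by auto
    obtain h where h: "h \<in> mspace C01" "mdist C01 g h < e" "h \<notin> EE n s"
      using EE_escape[OF n s gM e(1)] by blast
    have "h \<in> mball g e" using h gM by simp
    then show False using e T h by blast
  qed
  then show "mtopology_of C01 interior_of (mtopology_of C01 closure_of EE n s) = {}"
    using cl by auto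
qed

theorem mainTheorem3:
  shows "meagre_in (mtopology_of C01)
           {g \<in> mspace C01. \<not> completely_non_holder g}"
  unfolding meagre_in_def
proof (intro conjI exI[of _ "(\<lambda>p. EE (fst p) (snd p)) ` ({n. n \<ge> 1} \<times> {1, -1})"])
  show "{g \<in> mspace C01. \<not> completely_non_holder g} \<subseteq> topspace (mtopology_of C01)" by auto
  show "countable ((\<lambda>p. EE (fst p) (snd p)) ` ({n. n \<ge> 1} \<times> {1, -1}))"
    by (intro countable_image countable_SIGMA) auto
  show "\<forall>T\<in>(\<lambda>p. EE (fst p) (snd p)) ` ({n. n \<ge> 1} \<times> {1, -1}). nowhere_dense_in (mtopology_of C01) T"
    using EE_nowhere_dense by auto
  show "{g \<in> mspace C01. \<not> completely_non_holder g} \<subseteq> \<Union> ((\<lambda>p. EE (fst p) (snd p)) ` ({n. n \<ge> 1} \<times> {1, -1}))"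
  proof
    fix g assume "g \<in> {g \<in> mspace C01. \<not> completely_non_holder g}"
    then have g: "g \<in> mspace C01" and "\<not> completely_non_holder g" by auto
    then obtain x0 \<alpha> where x0: "x0 \<in> {0..1}" and a: "\<alpha> > 0" and H: "holder_left g x0 \<alpha> \<or> holder_right g x0 \<alpha>"
      unfolding completely_non_holder_def by blast
    have "\<exists>n\<ge>1. \<exists>s\<in>{1,-1}. g \<in> EE n s"
      using H
    proof
      assume hl: "holder_left g x0 \<alpha>"
      have eq: "{y\<in>{0..1}. 0 < (-1) * (y - x0)} = {0..<x0}" using x0 by auto
      have "x0 > 0" and "Limsup (at x0 within {y\<in>{0..1}. 0 < (-1)*(y-x0)}) (\<lambda>y. ereal (\<bar>g y - g x0\<bar> / \<bar>y - x0\<bar> powr \<alpha>)) < \<infinity>"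
        using hl unfolding holder_left_def eq by auto
      then obtain n where "n \<ge> 1" "g \<in> EE n (-1)"
        using holder_to_EE[OF g x0 a _ _ _, of "-1" x0] x0 by auto
      then show ?thesis by auto
    next
      assume hr: "holder_right g x0 \<alpha>"
      have eq: "{y\<in>{0..1}. 0 < 1 * (y - x0)} = {x0<..1}" using x0 by auto
      have "x0 < 1" and "Limsup (at x0 within {y\<in>{0..1}. 0 < 1*(y-x0)}) (\<lambda>y. ereal (\<bar>g y - g x0\<bar> / \<bar>y - x0\<bar> powr \<alpha>)) < \<infinity>"
        using hr unfolding holder_right_def eq by auto
      then obtain n where "n \<ge> 1" "g \<in> EE n 1"
        using holder_to_EE[OF g x0 a _ _ _, of 1 "1 - x0"] x0 by auto
      then show ?thesis by auto
    qed
    then show "g \<in> \<Union> ((\<lambda>p. EE (fst p) (snd p)) ` ({n. n \<ge> 1} \<times> {1, -1}))" by force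
  qed
qed

end
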